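(* Let $n \ge 1$ and let $x_1 < x_2 < \cdots < x_n$ and $y_1 < y_2 < \cdots < y_n$ be real numbers. Let $A$ be the $n\times n$ matrix $A = [e^{x_i y_j}]_{i,j=1,\ldots,n}$. Then $$\det(A) \ge \frac{1}{c_n} V(\mathbf{x}) V(\mathbf{y})\, e^{(x_1+\cdots+x_n)(y_1+\cdots+y_n)/n}$$ and $$\det(A) \le \frac{1}{c_n} V(\mathbf{x}) V(\mathbf{y})\, e^{x_1y_1+\cdots+x_ny_n}.$$
   Context: For $\mathbf{x}=(x_1,\ldots,x_n)$, $V(\mathbf{x}) := \prod_{1\le i<j\le n}(x_j-x_i)$ denotes the Vandermonde polynomial (equal to $1$ when $n=1$), and similarly $V(\mathbf{y})=\prod_{1\le i<j\le n}(y_j-y_i)$. The constant $c_n$ is $c_n := \prod_{i=1}^{n-1} (i!)$ (with $c_1=1$). *)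

theory Defs
  imports Complex_Main "Jordan_Normal_Form.Determinant"
begin

text \<open>Vandermonde product V(x) = prod over 1 <= i < j <= n of (x_j - x_i); here indices are 0-based: 0 <= i < j < n.\<close>
definition vandermonde :: "nat \<Rightarrow> (nat \<Rightarrow> real) \<Rightarrow> real" where
  "vandermonde n x = (\<Prod>j<n. \<Prod>i<j. (x j - x i))"

definition cn :: "nat \<Rightarrow> real" where
  "cn n = (\<Prod>i=1..<n. fact i)"

definition expmat :: "nat \<Rightarrow> (nat \<Rightarrow> real) \<Rightarrow> (nat \<Rightarrow> real) \<Rightarrow> real mat" where
  "expmat n x y = mat n n (\<lambda>(i, j). exp (x i * y j))"

end

theory Submission
  imports "HOL-Analysis.Analysis" Defs
begin


lemma perm_lt: "p permutes {0..<(n::nat)} \<Longrightarrow> i < n \<Longrightarrow> p i < n"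
  using permutes_in_image[of p "{0..<n}" i] by auto

lemma det_leib: "det (mat n n (\<lambda>(i,j). f i j)) =
  (\<Sum>p\<in>{p. p permutes {0..<n}}. signof p * (\<Prod>i<n. f i (p i)))"
proof -
  have "det (mat n n (\<lambda>(i,j). f i j)) = (\<Sum>p\<in>{p. p permutes {0..<n}}. signof p * (\<Prod>i=0..<n. mat n n (\<lambda>(i,j). f i j) $$ (i, p i)))"
    by (rule det_def') simp
  also have "\<dots> = (\<Sum>p\<in>{p. p permutes {0..<n}}. signof p * (\<Prod>i<n. f i (p i)))"
  proof (rule sum.cong[OF refl])
    fix p assume "p \<in> {p. p permutes {0..<n}}"
    then have "(\<Prod>i=0..<n. mat n n (\<lambda>(i,j). f i j) $$ (i, p i)) = (\<Prod>i<n. f i (p i))"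
      by (auto simp: atLeast0LessThan perm_lt intro!: prod.cong)
    then show "signof p * (\<Prod>i=0..<n. mat n n (\<lambda>(i,j). f i j) $$ (i, p i)) = signof p * (\<Prod>i<n. f i (p i))"
      by simp
  qed
  finally show ?thesis .
qed

lemma det_rowscale: "det (mat n n (\<lambda>(i,j). r i * f i j)) = (\<Prod>i<n. r i) * det (mat n n (\<lambda>(i,j). f i j))"
  by (simp add: det_leib prod.distrib sum_distrib_left mult_ac)

lemma det_transp: "det (mat n n (\<lambda>(i,j). f i j)) = det (mat n n (\<lambda>(i,j). f j i))"
proof -
  have "transpose_mat (mat n n (\<lambda>(i,j). f i j)) = mat n n (\<lambda>(i,j). f j i)"
    by (rule eq_matI) auto
  moreover have "det (transpose_mat (mat n n (\<lambda>(i,j). f i j))) = det (mat n n (\<lambda>(i,j). f i j))"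
    by (rule det_transpose[of _ n]) simp
  ultimately show ?thesis by simp
qed

lemma det_colscale: "det (mat n n (\<lambda>(i,j). c j * f i j)) = (\<Prod>j<n. c j) * det (mat n n (\<lambda>(i,j). f i j))"
  using det_rowscale[of n c "\<lambda>i j. f j i"] det_transp[of n "\<lambda>i j. c j * f i j"] det_transp[of n f]
  by simp

lemma det_upper_tri:
  assumes "\<And>i j. j < i \<Longrightarrow> i < n \<Longrightarrow> f i j = 0"
  shows "det (mat n n (\<lambda>(i,j). f i j)) = (\<Prod>i<n. f i i)"
proof -
  have "det (mat n n (\<lambda>(i,j). f i j)) = prod_list (diag_mat (mat n n (\<lambda>(i,j). f i j)))"
    by (rule det_upper_triangular) (auto intro!: upper_triangularI simp: assms)
  also have "\<dots> = prod_list (map (\<lambda>i. f i i) [0..<n])"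
    unfolding diag_mat_def by (auto intro!: arg_cong[where f=prod_list] map_cong)
  also have "\<dots> = (\<Prod>i<n. f i i)"
    by (simp add: prod.distinct_set_conv_list[symmetric] atLeast0LessThan)
  finally show ?thesis .
qed

lemma det_L2:
  fixes a :: "nat \<Rightarrow> nat \<Rightarrow> real"
  assumes a0: "\<And>i. i \<le> n \<Longrightarrow> a i 0 = 1"
  shows "det (mat (Suc n) (Suc n) (\<lambda>(i,j). a i j)) = det (mat n n (\<lambda>(i,j). a (Suc i) (Suc j) - a i (Suc j)))"
proof -
  define A where "A = mat (Suc n) (Suc n) (\<lambda>(i,j). a i j)"
  define L :: "real mat" where "L = mat (Suc n) (Suc n) (\<lambda>(i,j). (if j = i then 1 else 0) - (if j = Suc i then 1 else 0))"
  have A: "A \<in> carrier_mat (Suc n) (Suc n)" and L: "L \<in> carrier_mat (Suc n) (Suc n)" by (simp_all add: A_def L_def)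
  have detL: "det L = 1"
    unfolding L_def by (subst det_upper_tri) auto
  have LA: "L * A = mat (Suc n) (Suc n) (\<lambda>(i,j). if i < n then a i j - a (Suc i) j else a i j)"
  proof (rule eq_matI)
    fix i j assume i: "i < dim_row (mat (Suc n) (Suc n) (\<lambda>(i,j). if i < n then a i j - a (Suc i) j else a i j))"
      and j: "j < dim_col (mat (Suc n) (Suc n) (\<lambda>(i,j). if i < n then a i j - a (Suc i) j else a i j))"
    have "(L * A) $$ (i, j) = (\<Sum>k = 0..<Suc n. ((if k = i then 1 else 0) - (if k = Suc i then 1 else 0)) * a k j)"
      using i j by (simp add: L_def A_def scalar_prod_def)
    also have "\<dots> = (\<Sum>k = 0..<Suc n. (if k = i then a k j else 0) - (if k = Suc i then a k j else 0))"
      by (rule sum.cong) auto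
    also have "\<dots> = (\<Sum>k = 0..<Suc n. (if k = i then a k j else 0)) - (\<Sum>k = 0..<Suc n. (if k = Suc i then a k j else 0))"
      by (rule sum_subtractf)
    also have "\<dots> = (if i < n then a i j - a (Suc i) j else a i j)"
      using i by (auto simp: sum.delta' less_Suc_eq)
    finally show "(L * A) $$ (i, j) = mat (Suc n) (Suc n) (\<lambda>(i,j). if i < n then a i j - a (Suc i) j else a i j) $$ (i, j)"
      using i j by simp
  qed (auto simp: L_def A_def)
  have LAc: "L * A \<in> carrier_mat (Suc n) (Suc n)" using L A by simp
  have "det A = det (L * A)" using det_mult[OF L A] detL by simp
  also have "\<dots> = (\<Sum>i<Suc n. (L*A) $$ (i,0) * cofactor (L*A) i 0)"
    by (rule laplace_expansion_column[OF LAc]) simp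
  also have "\<dots> = cofactor (L*A) n 0"
    by (simp add: LA a0)
  also have "\<dots> = (-1)^n * det (mat_delete (L*A) n 0)"
    by (simp add: cofactor_def)
  also have "mat_delete (L*A) n 0 = mat n n (\<lambda>(i,j). (-1) * (a (Suc i) (Suc j) - a i (Suc j)))"
    by (rule eq_matI) (auto simp: mat_delete_def LA)
  also have "det \<dots> = (-1)^n * det (mat n n (\<lambda>(i,j). a (Suc i) (Suc j) - a i (Suc j)))"
    by (subst det_rowscale) simp
  finally show ?thesis by (simp add: A_def flip: power_add mult_2)
qed



lemma vandermonde_Suc: "vandermonde (Suc m) x = vandermonde m x * (\<Prod>i<m. x m - x i)"
  by (simp add: vandermonde_def)

lemma prod_neg_swap: "(\<Prod>i<m. (x i - c::real)) = (-1)^m * (\<Prod>i<m. c - x i)"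
proof -
  have "(\<Prod>i<m. (x i - c::real)) = (\<Prod>i<m. (-1) * (c - x i))" by (rule prod.cong) auto
  also have "\<dots> = (-1)^m * (\<Prod>i<m. c - x i)" unfolding prod.distrib by simp
  finally show ?thesis .
qed

lemma vdm: "det (mat n n (\<lambda>(i,j). x i ^ j)) = vandermonde n x"
proof (induction n)
  case 0
  then show ?case by (simp add: vandermonde_def)
next
  case (Suc m)
  define A :: "real mat" where "A = mat (Suc m) (Suc m) (\<lambda>(i,j). x i ^ j)"
  define U :: "real mat" where "U = mat (Suc m) (Suc m) (\<lambda>(i,j). (if i = j then 1 else 0) - (if j = Suc i then x m else 0))"
  have A: "A \<in> carrier_mat (Suc m) (Suc m)" and U: "U \<in> carrier_mat (Suc m) (Suc m)" by (simp_all add: A_def U_def)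
  have detU: "det U = 1"
    unfolding U_def by (subst det_upper_tri) auto
  have AU: "A * U = mat (Suc m) (Suc m) (\<lambda>(i,j). if j = 0 then 1 else (x i - x m) * x i ^ (j - 1))"
  proof (rule eq_matI)
    fix i j assume i: "i < dim_row (mat (Suc m) (Suc m) (\<lambda>(i,j). if j = 0 then 1 else (x i - x m) * x i ^ (j - 1)))"
      and j: "j < dim_col (mat (Suc m) (Suc m) (\<lambda>(i,j). if j = 0 then 1 else (x i - x m) * x i ^ (j - 1)))"
    have "(A * U) $$ (i, j) = (\<Sum>k = 0..<Suc m. x i ^ k * ((if k = j then 1 else 0) - (if j = Suc k then x m else 0)))"
      using i j by (simp add: U_def A_def scalar_prod_def)
    also have "\<dots> = (\<Sum>k = 0..<Suc m. (if k = j then x i ^ k else 0) - (if j = Suc k then x i ^ k * x m else 0))"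
      by (rule sum.cong) auto
    also have "\<dots> = (\<Sum>k = 0..<Suc m. (if k = j then x i ^ k else 0)) - (\<Sum>k = 0..<Suc m. (if j = Suc k then x i ^ k * x m else 0))"
      by (rule sum_subtractf)
    also have "\<dots> = (if j = 0 then 1 else (x i - x m) * x i ^ (j - 1))"
    proof (cases j)
      case 0 then show ?thesis using j by simp
    next
      case (Suc j')
      have "(\<Sum>k = 0..<Suc m. (if j = Suc k then x i ^ k * x m else 0)) = (\<Sum>k = 0..<Suc m. (if k = j' then x i ^ k * x m else 0))"
        using Suc by (intro sum.cong) auto
      also have "\<dots> = x i ^ j' * x m" using Suc j by simp
      moreover have "m = Suc j' \<or> Suc j' < m" using Suc j by auto
      ultimately show ?thesis using Suc j by (auto simp: algebra_simps)
    qed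
    finally show "(A * U) $$ (i, j) = mat (Suc m) (Suc m) (\<lambda>(i,j). if j = 0 then 1 else (x i - x m) * x i ^ (j - 1)) $$ (i, j)"
      using i j by simp
  qed (auto simp: U_def A_def)
  have AUc: "A * U \<in> carrier_mat (Suc m) (Suc m)" using U A by simp
  have "det A = det (A * U)" using det_mult[OF A U] detU by simp
  also have "\<dots> = (\<Sum>j<Suc m. (A*U) $$ (m,j) * cofactor (A*U) m j)"
    by (rule laplace_expansion_row[OF AUc]) simp
  also have "\<dots> = cofactor (A*U) m 0"
    by (simp add: AU sum.lessThan_Suc_shift del: sum.lessThan_Suc)
  also have "\<dots> = (-1)^m * det (mat_delete (A*U) m 0)"
    by (simp add: cofactor_def)
  also have "mat_delete (A*U) m 0 = mat m m (\<lambda>(i,j). (x i - x m) * x i ^ j)"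
    by (rule eq_matI) (auto simp: mat_delete_def AU)
  also have "det \<dots> = (\<Prod>i<m. x i - x m) * vandermonde m x"
    by (subst det_rowscale) (simp add: Suc.IH)
  finally show ?case
    by (simp add: A_def vandermonde_Suc prod_neg_swap flip: power_add mult_2)
qed

definition Pm :: "(nat \<Rightarrow> real) \<Rightarrow> nat \<Rightarrow> real poly" where
  "Pm x m = (\<Prod>k<m. [:- x k, 1:])"

lemma mult_lin: "p * [:a, 1:] = Polynomial.smult a p + pCons 0 (p::real poly)"
  by (simp add: mult_pCons_right)

lemma coeff_mult_lin: "coeff (p * [:a, 1:]) k = a * coeff p k + (case k of 0 \<Rightarrow> 0 | Suc k' \<Rightarrow> coeff (p::real poly) k')"
  by (simp add: mult_lin coeff_pCons split: nat.split)

lemma Pm_Suc: "Pm x (Suc m) = Pm x m * [:- x m, 1:]"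
  by (simp add: Pm_def)

lemma Pm_deg: "degree (Pm x m) \<le> m \<and> coeff (Pm x m) m = 1"
proof (induction m)
  case 0 then show ?case by (simp add: Pm_def)
next
  case (Suc m)
  have "degree (Pm x (Suc m)) \<le> degree (Pm x m) + degree [:- x m, 1:]"
    unfolding Pm_Suc by (rule degree_mult_le)
  also have "\<dots> \<le> Suc m" using Suc by simp
  finally have d: "degree (Pm x (Suc m)) \<le> Suc m" .
  have "coeff (Pm x m) (Suc m) = 0" using Suc by (intro coeff_eq_0) simp
  then have "coeff (Pm x (Suc m)) (Suc m) = 1"
    unfolding Pm_Suc coeff_mult_lin using Suc by simp
  with d show ?case by simp
qed

lemma Pm_coeff_pre: "coeff (Pm x (Suc m)) m = - (\<Sum>k<Suc m. x k)"
proof (induction m)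
  case 0 then show ?case by (simp add: Pm_def)
next
  case (Suc m)
  show ?case
    unfolding Pm_Suc[of x "Suc m"] coeff_mult_lin
    using Suc Pm_deg[of x "Suc m"] by simp
qed

lemma Pm_root: "i < m \<Longrightarrow> poly (Pm x m) (x i) = 0"
  by (auto simp: Pm_def poly_prod)

lemma poly_bound: assumes "degree p \<le> m" shows "poly (p::real poly) z = (\<Sum>k\<le>m. coeff p k * z ^ k)"
proof -
  have "poly p z = (\<Sum>i\<le>degree p. coeff p i * z ^ i)" by (simp add: poly_altdef)
  also have "\<dots> = (\<Sum>k\<le>m. coeff p k * z ^ k)"
    by (rule sum.mono_neutral_left) (use assms in \<open>auto simp: coeff_eq_0\<close>)
  finally show ?thesis .
qed

lemma pow_lincomb:
  assumes "i < m"
  shows "x i ^ m = (\<Sum>k<m. - coeff (Pm x m) k * x i ^ k)"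
proof -
  have "0 = (\<Sum>k\<le>m. coeff (Pm x m) k * x i ^ k)"
    using Pm_root[OF assms, of x] poly_bound[of "Pm x m" m "x i"] Pm_deg[of x m] by simp
  also have "\<dots> = (\<Sum>k<m. coeff (Pm x m) k * x i ^ k) + x i ^ m"
    using Pm_deg[of x m] by (simp add: lessThan_Suc_atMost[symmetric])
  finally show ?thesis by (simp add: sum_negf)
qed

lemma gvdm:
  assumes "1 \<le> m"
  shows "det (mat m m (\<lambda>(i,j). x i ^ (if j = m - 1 then m else j))) = (\<Sum>i<m. x i) * vandermonde m x"
proof -
  define c where "c k = - coeff (Pm x m) k" for k
  define A :: "real mat" where "A = mat m m (\<lambda>(i,j). x i ^ j)"
  define T :: "real mat" where "T = mat m m (\<lambda>(k,j). if j = m - 1 then c k else (if k = j then 1 else 0))"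
  have A: "A \<in> carrier_mat m m" and T: "T \<in> carrier_mat m m" by (simp_all add: A_def T_def)
  obtain m' where m': "m = Suc m'" using assms by (cases m) auto
  have cm: "c (m - 1) = (\<Sum>i<m. x i)"
    unfolding c_def m' using Pm_coeff_pre[of x m'] by simp
  have detT: "det T = (\<Sum>i<m. x i)"
  proof -
    have "det T = (\<Prod>i<m. (\<lambda>k j. if j = m - 1 then c k else (if k = j then 1 else 0)) i i)"
      unfolding T_def by (rule det_upper_tri) auto
    also have "\<dots> = (\<Prod>i<m. if i = m - 1 then c i else 1)"
      by (intro prod.cong) auto
    also have "\<dots> = c (m - 1)"
    proof -
      have "(\<Prod>i<m'. if i = m' then c i else 1) = 1" by (rule prod.neutral) auto
      then show ?thesis unfolding m' by simp
    qed
    finally show ?thesis using cm by simp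
  qed
  have AT: "A * T = mat m m (\<lambda>(i,j). x i ^ (if j = m - 1 then m else j))"
  proof (rule eq_matI)
    fix i j assume i: "i < dim_row (mat m m (\<lambda>(i,j). x i ^ (if j = m - 1 then m else j)))"
      and j: "j < dim_col (mat m m (\<lambda>(i,j). x i ^ (if j = m - 1 then m else j)))"
    have "(A * T) $$ (i, j) = (\<Sum>k = 0..<m. x i ^ k * (if j = m - 1 then c k else (if k = j then 1 else 0)))"
      using i j by (simp add: T_def A_def scalar_prod_def)
    also have "\<dots> = x i ^ (if j = m - 1 then m else j)"
    proof (cases "j = m - 1")
      case True
      then show ?thesis using pow_lincomb[of i m x] i by (simp add: c_def atLeast0LessThan mult.commute)
    next
      case False
      then show ?thesis using j by (simp add: if_distrib cong: if_cong)
    qed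
    finally show "(A * T) $$ (i, j) = mat m m (\<lambda>(i,j). x i ^ (if j = m - 1 then m else j)) $$ (i, j)"
      using i j by simp
  qed (auto simp: T_def A_def)
  have "det (A * T) = det A * det T" by (rule det_mult[OF A T])
  then show ?thesis using AT detT vdm[of m x] by (simp add: A_def)
qed



abbreviation MM :: "nat \<Rightarrow> (nat \<Rightarrow> real) measure" where
  "MM n \<equiv> Pi\<^sub>M {..<n} (\<lambda>_. lborel)"

definition ind :: "(nat \<Rightarrow> real) \<Rightarrow> (nat \<Rightarrow> real) \<Rightarrow> nat \<Rightarrow> (nat \<Rightarrow> real) \<Rightarrow> real" where
  "ind a b n z = (\<Prod>i<n. indicator {a i..b i} (z i))"

lemma psf: "product_sigma_finite (\<lambda>_. lborel :: real measure)"
  by (rule product_sigma_finite.intro) (rule sigma_finite_lborel)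

lemma INT:
  fixes f :: "nat \<Rightarrow> nat \<Rightarrow> real \<Rightarrow> real"
  assumes cont: "\<And>i j. i < n \<Longrightarrow> j < n \<Longrightarrow> continuous_on {a i..b i} (f i j)"
  shows "integrable (MM n) (\<lambda>z. ind a b n z * det (mat n n (\<lambda>(i,j). f i j (z i))))"
    and "(LINT z|MM n. ind a b n z * det (mat n n (\<lambda>(i,j). f i j (z i)))) =
         det (mat n n (\<lambda>(i,j). LINT u:{a i..b i}|lborel. f i j u))"
proof -
  interpret product_sigma_finite "\<lambda>_. lborel :: real measure" by (rule psf)
  define P where "P = {p. p permutes {0..<n}}"
  define g where "g = (\<lambda>p i u. indicator {a i..b i} u * f i (p i) u)"
  have eq: "ind a b n z * det (mat n n (\<lambda>(i,j). f i j (z i))) =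
        (\<Sum>p\<in>P. signof p * (\<Prod>i<n. g p i (z i)))" for z
    by (simp add: det_leib ind_def g_def P_def sum_distrib_left prod.distrib mult_ac)
  have gi: "integrable lborel (g p i)" if "p \<in> P" "i < n" for p i
  proof -
    have "p i < n" using that perm_lt by (auto simp: P_def)
    then have "set_integrable lborel {a i..b i} (f i (p i))"
      using cont that by (intro borel_integrable_atLeastAtMost') auto
    then show ?thesis by (simp add: set_integrable_def g_def)
  qed
  have pi: "integrable (MM n) (\<lambda>z. \<Prod>i<n. g p i (z i))" if "p \<in> P" for p
    by (rule product_integrable_prod) (auto intro: gi that)
  show "integrable (MM n) (\<lambda>z. ind a b n z * det (mat n n (\<lambda>(i,j). f i j (z i))))"
    unfolding eq by (rule Bochner_Integration.integrable_sum, rule integrable_mult_right, rule pi, assumption)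
  have "(LINT z|MM n. ind a b n z * det (mat n n (\<lambda>(i,j). f i j (z i)))) =
        (\<Sum>p\<in>P. signof p * (LINT z|MM n. (\<Prod>i<n. g p i (z i))))"
    unfolding eq by (subst Bochner_Integration.integral_sum) (auto intro!: integrable_mult_right pi)
  also have "\<dots> = (\<Sum>p\<in>P. signof p * (\<Prod>i<n. LINT u|lborel. g p i u))"
    by (intro sum.cong refl arg_cong2[where f="(*)"] product_integral_prod) (auto intro: gi)
  also have "\<dots> = det (mat n n (\<lambda>(i,j). LINT u:{a i..b i}|lborel. f i j u))"
    by (simp add: det_leib P_def g_def set_lebesgue_integral_def)
  finally show "(LINT z|MM n. ind a b n z * det (mat n n (\<lambda>(i,j). f i j (z i)))) =
         det (mat n n (\<lambda>(i,j). LINT u:{a i..b i}|lborel. f i j u))" .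
qed

lemma ftc:
  fixes F f :: "real \<Rightarrow> real"
  assumes "a \<le> b" "\<And>u. (F has_real_derivative f u) (at u)" "continuous_on {a..b} f"
  shows "(LINT u:{a..b}|lborel. f u) = F b - F a"
proof -
  have "(LBINT u=ereal a..ereal b. f u) = F b - F a"
    by (rule interval_integral_FTC_finite)
       (use assms in \<open>auto simp: has_real_derivative_iff_has_vector_derivative[symmetric] intro: has_field_derivative_at_within\<close>)
  then show ?thesis using interval_integral_Icc[OF assms(1), of f] by simp
qed

lemma ftc_exp: "(a::real) \<le> b \<Longrightarrow> exp (b * t) - exp (a * t) = (LINT u:{a..b}|lborel. t * exp (u * t))"
  by (rule ftc[of a b "\<lambda>u. exp (u * t)" "\<lambda>u. t * exp (u * t)", symmetric]) (auto intro!: derivative_eq_intros continuous_intros)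

lemma ftc_pow: "(a::real) \<le> b \<Longrightarrow> 1 \<le> k \<Longrightarrow> b ^ k / real k - a ^ k / real k = (LINT u:{a..b}|lborel. u ^ (k - 1))"
proof (rule ftc[of a b "\<lambda>u. u ^ k / real k" "\<lambda>u. u ^ (k - 1)", symmetric])
  fix u assume k: "1 \<le> k"
  have "((\<lambda>u. u ^ k / real k) has_real_derivative real k * u ^ (k - Suc 0) / real k) (at u)"
    using DERIV_cdivide[OF DERIV_pow[of k u UNIV], of "real k"] by simp
  then show "((\<lambda>u. u ^ k / real k) has_real_derivative u ^ (k - 1)) (at u)"
    using k by simp
qed (auto intro!: continuous_intros)



definition mono_c :: "nat \<Rightarrow> (nat \<Rightarrow> real) \<Rightarrow> bool" where
  "mono_c n x \<longleftrightarrow> (\<forall>i. Suc i < n \<longrightarrow> x i \<le> x (Suc i))"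

lemma mono_le: "mono_c n x \<Longrightarrow> i \<le> j \<Longrightarrow> j < n \<Longrightarrow> x i \<le> x j"
proof (induction j)
  case 0 then show ?case by simp
next
  case (Suc j)
  show ?case
  proof (cases "i = Suc j")
    case False
    then have "x i \<le> x j" using Suc by simp
    also have "x j \<le> x (Suc j)" using Suc by (simp add: mono_c_def)
    finally show ?thesis .
  qed simp
qed

lemma vdm_nonneg: assumes "mono_c n x" shows "0 \<le> vandermonde n x"
  unfolding vandermonde_def
proof (intro prod_nonneg)
  fix j i assume "j \<in> {..<n}" "i \<in> {..<j}"
  then show "0 \<le> x j - x i" using mono_le[of n x i j] assms by auto
qed

lemma cn_pos: "0 < cn n"
  unfolding cn_def by (intro prod_pos) auto

lemma cn_Suc: "cn (Suc n) = cn n * fact n"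
proof (cases n)
  case 0 then show ?thesis by (simp add: cn_def)
next
  case (Suc m) then show ?thesis by (simp add: cn_def prod.atLeastLessThan_Suc)
qed

lemma vdm_shift: "vandermonde (Suc n) y = (\<Prod>j<n. y (Suc j) - y 0) * vandermonde n (\<lambda>j. y (Suc j) - y 0)"
  unfolding vandermonde_def by (simp add: prod.lessThan_Suc_shift prod.distrib del: prod.lessThan_Suc)

lemma mat_cong': "(\<And>i j. i < n \<Longrightarrow> j < n \<Longrightarrow> f i j = g i j) \<Longrightarrow> mat n n (\<lambda>(i,j). f i j) = mat n n (\<lambda>(i,j). g i j)"
  by (rule eq_matI) auto

lemma ind_eq: "ind a b n z = (if (\<forall>i<n. a i \<le> z i \<and> z i \<le> b i) then 1 else 0)"
proof (induction n)
  case 0 then show ?case by (simp add: ind_def)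
next
  case (Suc n)
  have "ind a b (Suc n) z = ind a b n z * indicator {a n..b n} (z n)"
    by (simp add: ind_def)
  then show ?case using Suc by (auto simp: less_Suc_eq indicator_def)
qed

lemma REC:
  assumes mx: "mono_c (Suc n) x"
  shows "integrable (MM n) (\<lambda>z. ind x (\<lambda>i. x (Suc i)) n z * ((\<Prod>j<n. y (Suc j) - y 0) * det (expmat n z (\<lambda>j. y (Suc j) - y 0))))"
    and "det (expmat (Suc n) x y) = exp (y 0 * (\<Sum>i<Suc n. x i)) *
      (LINT z|MM n. ind x (\<lambda>i. x (Suc i)) n z * ((\<Prod>j<n. y (Suc j) - y 0) * det (expmat n z (\<lambda>j. y (Suc j) - y 0))))"
proof -
  define t where "t = (\<lambda>j. y (Suc j) - y 0)"
  have xi: "x i \<le> x (Suc i)" if "i < n" for i using mx that by (simp add: mono_c_def)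
  have ptw: "det (mat n n (\<lambda>(i,j). t j * exp (z i * t j))) = (\<Prod>j<n. t j) * det (expmat n z t)" for z
    by (subst det_colscale) (simp add: expmat_def)
  have intg: "integrable (MM n) (\<lambda>z. ind x (\<lambda>i. x (Suc i)) n z * det (mat n n (\<lambda>(i,j). (\<lambda>u. t j * exp (u * t j)) (z i))))"
    by (rule INT(1)) (auto intro!: continuous_intros)
  then show "integrable (MM n) (\<lambda>z. ind x (\<lambda>i. x (Suc i)) n z * ((\<Prod>j<n. y (Suc j) - y 0) * det (expmat n z (\<lambda>j. y (Suc j) - y 0))))"
    using ptw by (simp add: t_def)
  have "expmat (Suc n) x y = mat (Suc n) (Suc n) (\<lambda>(i,j). exp (x i * y 0) * exp (x i * (y j - y 0)))"
    unfolding expmat_def by (rule mat_cong') (simp add: exp_add[symmetric] algebra_simps)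
  then have "det (expmat (Suc n) x y) = (\<Prod>i<Suc n. exp (x i * y 0)) * det (mat (Suc n) (Suc n) (\<lambda>(i,j). exp (x i * (y j - y 0))))"
    by (simp add: det_rowscale)
  also have "(\<Prod>i<Suc n. exp (x i * y 0)) = exp (y 0 * (\<Sum>i<Suc n. x i))"
  proof -
    have "(\<Prod>i<Suc n. exp (x i * y 0)) = exp (\<Sum>i<Suc n. x i * y 0)" by (rule exp_sum[symmetric]) simp
    also have "(\<Sum>i<Suc n. x i * y 0) = (\<Sum>i<Suc n. x i) * y 0" by (rule sum_distrib_right[symmetric])
    finally show ?thesis by (simp add: mult.commute)
  qed
  also have "det (mat (Suc n) (Suc n) (\<lambda>(i,j). exp (x i * (y j - y 0)))) =
      det (mat n n (\<lambda>(i,j). exp (x (Suc i) * (y (Suc j) - y 0)) - exp (x i * (y (Suc j) - y 0))))"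
    by (rule det_L2) simp
  also have "mat n n (\<lambda>(i,j). exp (x (Suc i) * (y (Suc j) - y 0)) - exp (x i * (y (Suc j) - y 0))) =
      mat n n (\<lambda>(i,j). LINT u:{x i..x (Suc i)}|lborel. (\<lambda>u. t j * exp (u * t j)) u)"
    by (rule mat_cong') (simp add: t_def ftc_exp xi)
  also have "det \<dots> = (LINT z|MM n. ind x (\<lambda>i. x (Suc i)) n z * det (mat n n (\<lambda>(i,j). (\<lambda>u. t j * exp (u * t j)) (z i))))"
    by (rule INT(2)[symmetric]) (auto intro!: continuous_intros)
  also have "\<dots> = (LINT z|MM n. ind x (\<lambda>i. x (Suc i)) n z * ((\<Prod>j<n. t j) * det (expmat n z t)))"
    using ptw by simp
  finally show "det (expmat (Suc n) x y) = exp (y 0 * (\<Sum>i<Suc n. x i)) *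
      (LINT z|MM n. ind x (\<lambda>i. x (Suc i)) n z * ((\<Prod>j<n. y (Suc j) - y 0) * det (expmat n z (\<lambda>j. y (Suc j) - y 0))))"
    by (simp add: t_def)
qed

lemma VI:
  assumes mx: "mono_c (Suc n) x" and e0: "e 0 = 0" and e1: "\<And>j. j < n \<Longrightarrow> 1 \<le> e (Suc j)"
  shows "integrable (MM n) (\<lambda>z. ind x (\<lambda>i. x (Suc i)) n z * det (mat n n (\<lambda>(i,j). z i ^ (e (Suc j) - 1))))"
    and "(LINT z|MM n. ind x (\<lambda>i. x (Suc i)) n z * det (mat n n (\<lambda>(i,j). z i ^ (e (Suc j) - 1)))) * (\<Prod>j<n. real (e (Suc j)))
         = det (mat (Suc n) (Suc n) (\<lambda>(i,j). x i ^ e j))"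
proof -
  have xi: "x i \<le> x (Suc i)" if "i < n" for i using mx that by (simp add: mono_c_def)
  show "integrable (MM n) (\<lambda>z. ind x (\<lambda>i. x (Suc i)) n z * det (mat n n (\<lambda>(i,j). z i ^ (e (Suc j) - 1))))"
    by (rule INT(1)[of n x "\<lambda>i. x (Suc i)" "\<lambda>i j u. u ^ (e (Suc j) - 1)"]) (auto intro!: continuous_intros)
  define c where "c = (\<lambda>j. if j = 0 then 1 else 1 / real (e j))"
  have cprod: "(\<Prod>j<n. c (Suc j)) * (\<Prod>j<n. real (e (Suc j))) = 1"
  proof -
    have "(\<Prod>j<n. c (Suc j)) * (\<Prod>j<n. real (e (Suc j))) = (\<Prod>j<n. c (Suc j) * real (e (Suc j)))"
      by (simp add: prod.distrib)
    also have "\<dots> = 1" using e1 by (intro prod.neutral) (auto simp: c_def Suc_le_eq)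
    finally show ?thesis .
  qed
  have "det (mat (Suc n) (Suc n) (\<lambda>(i,j). c j * x i ^ e j)) = (\<Prod>j<n. c (Suc j)) * det (mat (Suc n) (Suc n) (\<lambda>(i,j). x i ^ e j))"
    by (subst det_colscale) (simp add: prod.lessThan_Suc_shift c_def del: prod.lessThan_Suc)
  moreover have "det (mat (Suc n) (Suc n) (\<lambda>(i,j). c j * x i ^ e j)) =
      det (mat n n (\<lambda>(i,j). c (Suc j) * x (Suc i) ^ e (Suc j) - c (Suc j) * x i ^ e (Suc j)))"
    by (rule det_L2) (simp add: c_def e0)
  moreover have "mat n n (\<lambda>(i,j). c (Suc j) * x (Suc i) ^ e (Suc j) - c (Suc j) * x i ^ e (Suc j)) =
      mat n n (\<lambda>(i,j). LINT u:{x i..x (Suc i)}|lborel. (\<lambda>u. u ^ (e (Suc j) - 1)) u)"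
  proof (rule mat_cong')
    fix i j assume ij: "i < n" "j < n"
    show "c (Suc j) * x (Suc i) ^ e (Suc j) - c (Suc j) * x i ^ e (Suc j) = (LINT u:{x i..x (Suc i)}|lborel. (\<lambda>u. u ^ (e (Suc j) - 1)) u)"
      using ftc_pow[OF xi[OF ij(1)] e1[OF ij(2)]] by (simp add: c_def)
  qed
  moreover have "(LINT z|MM n. ind x (\<lambda>i. x (Suc i)) n z * det (mat n n (\<lambda>(i,j). z i ^ (e (Suc j) - 1)))) =
      det (mat n n (\<lambda>(i,j). LINT u:{x i..x (Suc i)}|lborel. (\<lambda>u. u ^ (e (Suc j) - 1)) u))"
    by (rule INT(2)[of n x "\<lambda>i. x (Suc i)" "\<lambda>i j u. u ^ (e (Suc j) - 1)"]) (auto intro!: continuous_intros)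
  ultimately have "(LINT z|MM n. ind x (\<lambda>i. x (Suc i)) n z * det (mat n n (\<lambda>(i,j). z i ^ (e (Suc j) - 1))))
      = (\<Prod>j<n. c (Suc j)) * det (mat (Suc n) (Suc n) (\<lambda>(i,j). x i ^ e j))" by simp
  then show "(LINT z|MM n. ind x (\<lambda>i. x (Suc i)) n z * det (mat n n (\<lambda>(i,j). z i ^ (e (Suc j) - 1)))) * (\<Prod>j<n. real (e (Suc j)))
         = det (mat (Suc n) (Suc n) (\<lambda>(i,j). x i ^ e j))"
  proof -
    fix L D :: real assume "L = (\<Prod>j<n. c (Suc j)) * D"
    then have "L * (\<Prod>j<n. real (e (Suc j))) = ((\<Prod>j<n. c (Suc j)) * (\<Prod>j<n. real (e (Suc j)))) * D" by simp
    then show "L * (\<Prod>j<n. real (e (Suc j))) = D" using cprod by simp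
  qed
qed



definition LBd :: "nat \<Rightarrow> (nat \<Rightarrow> real) \<Rightarrow> (nat \<Rightarrow> real) \<Rightarrow> real" where
  "LBd n x y = vandermonde n x * vandermonde n y / cn n * exp ((\<Sum>i<n. x i) * (\<Sum>i<n. y i) / real n)"
definition UBd :: "nat \<Rightarrow> (nat \<Rightarrow> real) \<Rightarrow> (nat \<Rightarrow> real) \<Rightarrow> real" where
  "UBd n x y = vandermonde n x * vandermonde n y / cn n * exp (\<Sum>i<n. x i * y i)"

lemma exp_lin: "exp m * (1 + u - m) \<le> exp (u::real)"
proof -
  have "1 + (u - m) \<le> exp (u - m)" by (rule exp_ge_add_one_self)
  then have "exp m * (1 + (u - m)) \<le> exp m * exp (u - m)" by (intro mult_left_mono) auto
  then have "exp m * (1 + (u - m)) \<le> exp u" by (simp add: exp_diff)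
  then show ?thesis by (simp add: add_diff_eq)
qed

lemma box_mono:
  assumes "ind x (\<lambda>i. x (Suc i)) n z \<noteq> 0"
  shows "mono_c n z" "\<And>i. i < n \<Longrightarrow> x i \<le> z i \<and> z i \<le> x (Suc i)" "ind x (\<lambda>i. x (Suc i)) n z = 1"
proof -
  have b: "\<forall>i<n. x i \<le> z i \<and> z i \<le> x (Suc i)" using assms by (auto simp: ind_eq split: if_splits)
  then show "\<And>i. i < n \<Longrightarrow> x i \<le> z i \<and> z i \<le> x (Suc i)" by auto
  show "mono_c n z" unfolding mono_c_def
  proof (intro allI impI)
    fix i assume "Suc i < n"
    then have "z i \<le> x (Suc i)" "x (Suc i) \<le> z (Suc i)" using b by auto
    then show "z i \<le> z (Suc i)" by simp
  qed
  show "ind x (\<lambda>i. x (Suc i)) n z = 1" using b by (simp add: ind_eq)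
qed

lemma ind_01: "ind a b n z = 0 \<or> ind a b n z = 1"
  by (simp add: ind_eq)

lemma MAIN:
  assumes "1 \<le> n" "mono_c n x" "mono_c n y"
  shows "LBd n x y \<le> det (expmat n x y) \<and> det (expmat n x y) \<le> UBd n x y"
  using assms
proof (induction n arbitrary: x y rule: nat_induct_at_least)
  case base
  have "det (expmat 1 x y) = exp (x 0 * y 0)"
    by (subst det_single[of _]) (auto simp: expmat_def)
  then show ?case by (simp add: LBd_def UBd_def vandermonde_def cn_def)
next
  case (Suc n)
  note IH = Suc.IH
  have n1: "1 \<le> n" by fact
  define t where "t = (\<lambda>j. y (Suc j) - y 0)"
  define I where "I = ind x (\<lambda>i. x (Suc i)) n"
  define K where "K = (\<Prod>j<n. t j)"
  define Sx where "Sx = (\<Sum>i<Suc n. x i)"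
  define St where "St = (\<Sum>j<n. t j)"
  define VB where "VB = vandermonde (Suc n) x"
  have mx: "mono_c (Suc n) x" and my: "mono_c (Suc n) y" by fact+
  have mt: "mono_c n t" using my by (auto simp: mono_c_def t_def)
  have t0: "0 \<le> t j" if "j < n" for j using mono_le[OF my, of 0 "Suc j"] that by (simp add: t_def)
  have K0: "0 \<le> K" unfolding K_def using t0 by (intro prod_nonneg) auto
  have Vt0: "0 \<le> vandermonde n t" by (rule vdm_nonneg[OF mt])
  have cnp: "0 < cn n" by (rule cn_pos)
  have VB0: "0 \<le> VB" unfolding VB_def by (rule vdm_nonneg[OF mx])
  have Vy: "vandermonde (Suc n) y = K * vandermonde n t"
    unfolding K_def t_def by (rule vdm_shift)
  have cnS: "cn (Suc n) = cn n * fact n" by (rule cn_Suc)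
  have Fint: "integrable (MM n) (\<lambda>z. I z * (K * det (expmat n z t)))"
    using REC(1)[OF mx, of y] by (simp add: I_def K_def t_def)
  have D: "det (expmat (Suc n) x y) = exp (y 0 * Sx) * (LINT z|MM n. I z * (K * det (expmat n z t)))"
    using REC(2)[OF mx, of y] by (simp add: I_def K_def t_def Sx_def)
  have P0int: "integrable (MM n) (\<lambda>z. I z * vandermonde n z)"
    using VI(1)[OF mx, of id] by (simp add: I_def vdm)
  have P0: "(LINT z|MM n. I z * vandermonde n z) * fact n = VB"
  proof -
    have "(LINT z|MM n. I z * vandermonde n z) * (\<Prod>j<n. real (id (Suc j))) = VB"
      using VI(2)[OF mx, of id] by (simp add: I_def vdm VB_def)
    moreover have "(\<Prod>j<n. real (id (Suc j))) = fact n"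
      by (simp add: fact_prod_Suc atLeast0LessThan)
    ultimately show ?thesis by simp
  qed
  define e where "e = (\<lambda>j. if j = n then Suc n else j)"
  have e0: "e 0 = 0" using n1 by (simp add: e_def)
  have e1: "1 \<le> e (Suc j)" for j by (simp add: e_def)
  have mat1: "mat n n (\<lambda>(i,j). z i ^ (e (Suc j) - 1)) = mat n n (\<lambda>(i,j). z i ^ (if j = n - 1 then n else j))" for z
    by (rule mat_cong') (use n1 in \<open>auto simp: e_def\<close>)
  have mat2: "mat (Suc n) (Suc n) (\<lambda>(i,j). x i ^ e j) = mat (Suc n) (Suc n) (\<lambda>(i,j). x i ^ (if j = Suc n - 1 then Suc n else j))"
    by (rule mat_cong') (auto simp: e_def)
  have Q1int: "integrable (MM n) (\<lambda>z. I z * ((\<Sum>i<n. z i) * vandermonde n z))"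
    using VI(1)[OF mx e0 e1] unfolding mat1 gvdm[OF n1] by (simp add: I_def)
  define Q where "Q = (\<Prod>j<n. real (e (Suc j)))"
  have Q1: "(LINT z|MM n. I z * ((\<Sum>i<n. z i) * vandermonde n z)) * Q = Sx * VB"
  proof -
    have g2: "det (mat (Suc n) (Suc n) (\<lambda>(i,j). x i ^ (if j = Suc n - 1 then Suc n else j))) = Sx * VB"
      using gvdm[of "Suc n" x] by (simp add: Sx_def VB_def)
    show ?thesis
      using VI(2)[OF mx e0 e1] unfolding mat1 mat2 gvdm[OF n1] g2 by (simp add: I_def Q_def)
  qed
  have Qv: "Q * real n = fact n * real (Suc n)"
  proof -
    obtain n' where n': "n = Suc n'" using n1 by (cases n) auto
    have "Q = (\<Prod>j<n'. real (e (Suc j))) * real (e (Suc n'))"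
      unfolding Q_def n' by simp
    also have "(\<Prod>j<n'. real (e (Suc j))) = (\<Prod>j<n'. real (Suc j))"
      by (rule prod.cong) (auto simp: e_def n')
    also have "e (Suc n') = Suc n" by (simp add: e_def n')
    finally have "Q = (\<Prod>j<n'. real (Suc j)) * real (Suc n)" .
    also have "(\<Prod>j<n'. real (Suc j)) = fact n'"
      by (simp add: fact_prod_Suc atLeast0LessThan)
    finally show ?thesis unfolding n' by (simp add: algebra_simps)
  qed
  have Qpos: "0 < Q" unfolding Q_def by (intro prod_pos) (auto simp: e_def)
  define P0v where "P0v = (LINT z|MM n. I z * vandermonde n z)"
  define Q1v where "Q1v = (LINT z|MM n. I z * ((\<Sum>i<n. z i) * vandermonde n z))"
  define CU where "CU = K * vandermonde n t / cn n * exp (\<Sum>i<n. x (Suc i) * t i)"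
  have ub_pt: "I z * (K * det (expmat n z t)) \<le> CU * (I z * vandermonde n z)" for z
  proof (cases "I z = 0")
    case False
    then have I1: "I z = 1" and mz: "mono_c n z" and bx: "\<And>i. i < n \<Longrightarrow> x i \<le> z i \<and> z i \<le> x (Suc i)"
      using box_mono[of x n z] by (auto simp: I_def)
    have h: "det (expmat n z t) \<le> UBd n z t" using IH[OF mz mt] by simp
    have Vz: "0 \<le> vandermonde n z" by (rule vdm_nonneg[OF mz])
    have "(\<Sum>i<n. z i * t i) \<le> (\<Sum>i<n. x (Suc i) * t i)"
      using bx t0 by (intro sum_mono mult_right_mono) auto
    then have "exp (\<Sum>i<n. z i * t i) \<le> exp (\<Sum>i<n. x (Suc i) * t i)" by simp
    then have "UBd n z t \<le> vandermonde n z * vandermonde n t / cn n * exp (\<Sum>i<n. x (Suc i) * t i)"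
      unfolding UBd_def using Vz Vt0 cnp by (intro mult_left_mono) auto
    with h have "K * det (expmat n z t) \<le> K * (vandermonde n z * vandermonde n t / cn n * exp (\<Sum>i<n. x (Suc i) * t i))"
      using K0 by (intro mult_left_mono) auto
    then show ?thesis using I1 by (simp add: CU_def algebra_simps)
  qed (simp)
  have "(LINT z|MM n. I z * (K * det (expmat n z t))) \<le> (LINT z|MM n. CU * (I z * vandermonde n z))"
    by (rule integral_mono[OF Fint]) (use P0int ub_pt in auto)
  also have "\<dots> = CU * P0v" by (simp add: P0v_def)
  finally have ubi: "(LINT z|MM n. I z * (K * det (expmat n z t))) \<le> CU * P0v" .
  have expU: "y 0 * Sx + (\<Sum>i<n. x (Suc i) * t i) = (\<Sum>i<Suc n. x i * y i)"
    unfolding Sx_def t_def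
    by (simp add: sum.lessThan_Suc_shift right_diff_distrib sum_subtractf sum_distrib_left algebra_simps del: sum.lessThan_Suc)
  have "det (expmat (Suc n) x y) \<le> exp (y 0 * Sx) * (CU * P0v)"
    unfolding D using ubi by (intro mult_left_mono) auto
  also have "\<dots> = UBd (Suc n) x y"
  proof -
    have P0v: "P0v = VB / fact n" using P0 by (simp add: P0v_def field_simps)
    have "exp (y 0 * Sx) * (CU * P0v) = VB * (K * vandermonde n t) / (cn n * fact n) * (exp (y 0 * Sx) * exp (\<Sum>i<n. x (Suc i) * t i))"
      by (simp add: CU_def P0v field_simps)
    also have "exp (y 0 * Sx) * exp (\<Sum>i<n. x (Suc i) * t i) = exp (\<Sum>i<Suc n. x i * y i)"
      by (simp add: exp_add[symmetric] expU)
    finally show ?thesis by (simp add: UBd_def VB_def Vy cnS)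
  qed
  finally have UB: "det (expmat (Suc n) x y) \<le> UBd (Suc n) x y" .
  define m where "m = Sx * St / real (Suc n)"
  define s where "s = St / real n"
  define CL where "CL = K * vandermonde n t / cn n * exp m"
  have lb_pt: "CL * ((1 - m) * (I z * vandermonde n z) + s * (I z * ((\<Sum>i<n. z i) * vandermonde n z))) \<le> I z * (K * det (expmat n z t))" for z
  proof (cases "I z = 0")
    case False
    then have I1: "I z = 1" and mz: "mono_c n z"
      using box_mono[of x n z] by (auto simp: I_def)
    have h: "LBd n z t \<le> det (expmat n z t)" using IH[OF mz mt] by simp
    have Vz: "0 \<le> vandermonde n z" by (rule vdm_nonneg[OF mz])
    have "exp m * (1 + (\<Sum>i<n. z i) * St / real n - m) \<le> exp ((\<Sum>i<n. z i) * St / real n)"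
      by (rule exp_lin)
    then have "vandermonde n z * vandermonde n t / cn n * (exp m * (1 + (\<Sum>i<n. z i) * St / real n - m)) \<le> LBd n z t"
      unfolding LBd_def St_def using Vz Vt0 cnp by (intro mult_left_mono) auto
    with h have "K * (vandermonde n z * vandermonde n t / cn n * (exp m * (1 + (\<Sum>i<n. z i) * St / real n - m))) \<le> K * det (expmat n z t)"
      using K0 by (intro mult_left_mono) auto
    then show ?thesis using I1 by (simp add: CL_def s_def algebra_simps)
  qed (simp)
  have "(LINT z|MM n. CL * ((1 - m) * (I z * vandermonde n z) + s * (I z * ((\<Sum>i<n. z i) * vandermonde n z)))) \<le> (LINT z|MM n. I z * (K * det (expmat n z t)))"
    by (rule integral_mono[OF _ Fint]) (use P0int Q1int lb_pt in auto)
  moreover have "(LINT z|MM n. CL * ((1 - m) * (I z * vandermonde n z) + s * (I z * ((\<Sum>i<n. z i) * vandermonde n z)))) = CL * ((1 - m) * P0v + s * Q1v)"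
    using P0int Q1int by (simp add: P0v_def Q1v_def)
  moreover have "(1 - m) * P0v + s * Q1v = VB / fact n"
  proof -
    have P0v: "P0v = VB / fact n" using P0 by (simp add: P0v_def field_simps)
    have Q1v: "Q1v = Sx * VB / Q" using Q1 Qpos by (simp add: Q1v_def field_simps)
    have "s * Q1v = m * (VB / fact n)"
      unfolding s_def Q1v m_def using Qv n1 Qpos
      by (simp add: field_simps)
    then show ?thesis by (simp add: P0v field_simps)
  qed
  ultimately have lbi: "CL * (VB / fact n) \<le> (LINT z|MM n. I z * (K * det (expmat n z t)))" by simp
  have expL: "y 0 * Sx + m = Sx * (\<Sum>i<Suc n. y i) / real (Suc n)"
  proof -
    have hS: "St = (\<Sum>i<Suc n. y i) - real (Suc n) * y 0"
      unfolding St_def t_def by (simp add: sum.lessThan_Suc_shift sum_subtractf del: sum.lessThan_Suc) (simp add: algebra_simps)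
    show ?thesis unfolding m_def hS by (simp add: field_simps del: sum.lessThan_Suc)
  qed
  have "LBd (Suc n) x y = exp (y 0 * Sx) * (CL * (VB / fact n))"
  proof -
    have "exp (y 0 * Sx) * (CL * (VB / fact n)) = VB * (K * vandermonde n t) / (cn n * fact n) * (exp (y 0 * Sx) * exp m)"
      by (simp add: CL_def field_simps)
    also have "exp (y 0 * Sx) * exp m = exp (Sx * (\<Sum>i<Suc n. y i) / real (Suc n))"
      by (simp add: exp_add[symmetric] expL)
    finally show ?thesis by (simp add: LBd_def VB_def Vy cnS Sx_def)
  qed
  also have "\<dots> \<le> det (expmat (Suc n) x y)"
    unfolding D using lbi by (intro mult_left_mono) auto
  finally show ?case using UB by simp
qed


theorem theorem1:
  fixes n :: nat and x y :: "nat \<Rightarrow> real"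
  assumes "n \<ge> 1"
    and "\<And>i j. i < j \<Longrightarrow> j < n \<Longrightarrow> x i < x j"
    and "\<And>i j. i < j \<Longrightarrow> j < n \<Longrightarrow> y i < y j"
  shows "det (expmat n x y) \<ge> vandermonde n x * vandermonde n y / cn n
           * exp ((\<Sum>i<n. x i) * (\<Sum>i<n. y i) / real n)
       \<and> det (expmat n x y) \<le> vandermonde n x * vandermonde n y / cn n
           * exp (\<Sum>i<n. x i * y i)"
proof -
  have mx: "mono_c n x" unfolding mono_c_def using assms(2) by (auto intro: less_imp_le)
  have my: "mono_c n y" unfolding mono_c_def using assms(3) by (auto intro: less_imp_le)
  show ?thesis using MAIN[OF assms(1) mx my] by (simp add: LBd_def UBd_def)
qed

end
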